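(* Let $d\ge1$, let $G$ be a graph and $F$ a set of nonedges of $G$. Let $\{B_x\}_{x\in V(M)}$ be an induced minor model of a graph $M$ in $G$ such that for every $uv\in F$, $u\in B_x$ and $v\in B_y$ for some $x\neq y$ and no edge of $G$ joins $B_x$ and $B_y$; let $F'$ be the set of the corresponding pairs $xy$ (nonedges of $M$). If $(G,F)$ is $d$-convex (resp. $d$-Cayley-connected), then $(M,F')$ is $d$-convex (resp. $d$-Cayley-connected).
   Context: A linkage $(G,\ell)$: finite simple graph $G$ and $\ell:E(G)\to\mathbb{R}_{\ge0}$ (squared lengths). A $d$-realization is $p:V(G)\to\mathbb{R}^d$ with $\|p(a)-p(b)\|^2=\ell(ab)$ for all $ab\in E(G)$; $\mathcal{C}^d(G,\ell)$ is the set of these. For an indexed set $F=\{u_1v_1,\dots,u_mv_m\}$ of nonedges (pairs of distinct non-adjacent vertices), $\phi_F(p)=(\|p(u_i)-p(v_i)\|^2)_i$ and $\Omega^d_F(G,\ell)=\phi_F(\mathcal{C}^d(G,\ell))$. $(G,F)$ is $d$-convex (resp. $d$-Cayley-connected) if $\Omega^d_F(G,\ell)$ is convex (resp. path-connected) for every $\ell$; the empty set counts as convex and connected. An induced minor model of $M$ in $G$ is a partition $\{B_x\}_{x\in V(M)}$ of $V(G)$ into nonempty sets each inducing a connected subgraph, such that $xy\in E(M)$ if and only if some edge of $G$ joins $B_x$ and $B_y$ (i.e. $M$ arises from $G$ by contractions only). *)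

theory Defs
  imports "HOL-Analysis.Analysis"
begin

text \<open>A finite simple graph: vertex set = UNIV of a finite type, edges given by a
symmetric irreflexive relation.\<close>
definition simple_graph :: "('a::finite \<Rightarrow> 'a \<Rightarrow> bool) \<Rightarrow> bool" where
  "simple_graph E \<longleftrightarrow> (\<forall>a b. E a b \<longrightarrow> E b a) \<and> (\<forall>a. \<not> E a a)"

definition nonedge :: "('a \<Rightarrow> 'a \<Rightarrow> bool) \<Rightarrow> 'a \<Rightarrow> 'a \<Rightarrow> bool" where
  "nonedge E u v \<longleftrightarrow> u \<noteq> v \<and> \<not> E u v"

definition indexed_nonedges ::
  "('a \<Rightarrow> 'a \<Rightarrow> bool) \<Rightarrow> 'i set \<Rightarrow> ('i \<Rightarrow> 'a \<times> 'a) \<Rightarrow> bool" where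
  "indexed_nonedges E I F \<longleftrightarrow>
     (\<forall>i\<in>I. nonedge E (fst (F i)) (snd (F i))) \<and>
     (\<forall>i\<in>I. \<forall>j\<in>I. i \<noteq> j \<longrightarrow> {fst (F i), snd (F i)} \<noteq> {fst (F j), snd (F j)})"

text \<open>Squared edge lengths \<open>\<ell>\<close>: nonnegative, and (being a function on unordered edges)
symmetric on edges; values on nonedges are irrelevant.\<close>
definition linkage_lengths :: "('a \<Rightarrow> 'a \<Rightarrow> bool) \<Rightarrow> ('a \<Rightarrow> 'a \<Rightarrow> real) \<Rightarrow> bool" where
  "linkage_lengths E l \<longleftrightarrow> (\<forall>a b. E a b \<longrightarrow> 0 \<le> l a b \<and> l a b = l b a)"

text \<open>d-realizations: maps into R^d (d = CARD('d)).\<close>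
definition realizations ::
  "'d::finite itself \<Rightarrow> ('a \<Rightarrow> 'a \<Rightarrow> bool) \<Rightarrow> ('a \<Rightarrow> 'a \<Rightarrow> real) \<Rightarrow> ('a \<Rightarrow> real^'d) set" where
  "realizations _ E l = {p. \<forall>a b. E a b \<longrightarrow> (norm (p a - p b))\<^sup>2 = l a b}"

text \<open>The Cayley map \<open>\<phi>_F\<close>, with values in R^I, embedded in real^'i (coordinates outside I are 0).\<close>
definition cayley_map ::
  "'i::finite set \<Rightarrow> ('i \<Rightarrow> 'a \<times> 'a) \<Rightarrow> ('a \<Rightarrow> real^'d) \<Rightarrow> real^'i" where
  "cayley_map I F p = (\<chi> i. if i \<in> I then (norm (p (fst (F i)) - p (snd (F i))))\<^sup>2 else 0)"

definition cayley_config ::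
  "'d::finite itself \<Rightarrow> ('a \<Rightarrow> 'a \<Rightarrow> bool) \<Rightarrow> ('a \<Rightarrow> 'a \<Rightarrow> real) \<Rightarrow> 'i::finite set
     \<Rightarrow> ('i \<Rightarrow> 'a \<times> 'a) \<Rightarrow> (real^'i) set" where
  "cayley_config D E l I F = cayley_map I F ` realizations D E l"

definition d_convex ::
  "'d::finite itself \<Rightarrow> ('a \<Rightarrow> 'a \<Rightarrow> bool) \<Rightarrow> 'i::finite set \<Rightarrow> ('i \<Rightarrow> 'a \<times> 'a) \<Rightarrow> bool" where
  "d_convex D E I F \<longleftrightarrow> (\<forall>l. linkage_lengths E l \<longrightarrow> convex (cayley_config D E l I F))"

definition d_cayley_connected ::
  "'d::finite itself \<Rightarrow> ('a \<Rightarrow> 'a \<Rightarrow> bool) \<Rightarrow> 'i::finite set \<Rightarrow> ('i \<Rightarrow> 'a \<times> 'a) \<Rightarrow> bool" where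
  "d_cayley_connected D E I F \<longleftrightarrow>
     (\<forall>l. linkage_lengths E l \<longrightarrow> path_connected (cayley_config D E l I F))"

definition induces_connected :: "('a \<Rightarrow> 'a \<Rightarrow> bool) \<Rightarrow> 'a set \<Rightarrow> bool" where
  "induces_connected E S \<longleftrightarrow>
     (\<forall>a\<in>S. \<forall>b\<in>S. (\<lambda>u v. u \<in> S \<and> v \<in> S \<and> E u v)\<^sup>*\<^sup>* a b)"

definition induced_minor_model ::
  "('a \<Rightarrow> 'a \<Rightarrow> bool) \<Rightarrow> ('b \<Rightarrow> 'b \<Rightarrow> bool) \<Rightarrow> ('b \<Rightarrow> 'a set) \<Rightarrow> bool" where
  "induced_minor_model E M B \<longleftrightarrow>
     (\<forall>x. B x \<noteq> {}) \<and>
     (\<forall>x y. x \<noteq> y \<longrightarrow> B x \<inter> B y = {}) \<and>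
     (\<Union>x. B x) = UNIV \<and>
     (\<forall>x. induces_connected E (B x)) \<and>
     (\<forall>x y. M x y \<longleftrightarrow> (x \<noteq> y \<and> (\<exists>a\<in>B x. \<exists>b\<in>B y. E a b)))"

end

theory Submission
  imports Defs
begin

lemma linear_K:
  fixes J :: "'j::finite set" and g :: "'j \<Rightarrow> 'i::finite"
  shows "linear (\<lambda>w::real^'i. \<chi> j. if j \<in> J then w $ (g j) else 0)"
  by (rule linearI) (auto simp: vec_eq_iff)

theorem mainTheorem6:
  fixes E :: "'a::finite \<Rightarrow> 'a \<Rightarrow> bool"
    and M :: "'b::finite \<Rightarrow> 'b \<Rightarrow> bool"
    and B :: "'b \<Rightarrow> 'a set"
    and I :: "'i::finite set" and F :: "'i \<Rightarrow> 'a \<times> 'a"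
    and J :: "'j::finite set" and F' :: "'j \<Rightarrow> 'b \<times> 'b"
    and D :: "'d::finite itself"
  assumes "simple_graph E" and "simple_graph M"
    and "indexed_nonedges E I F"
    and "induced_minor_model E M B"
    and "\<forall>i\<in>I. \<exists>x y. x \<noteq> y \<and> fst (F i) \<in> B x \<and> snd (F i) \<in> B y \<and>
                   \<not> (\<exists>a\<in>B x. \<exists>b\<in>B y. E a b)"
    and "indexed_nonedges M J F'"
    and "{{fst (F' j), snd (F' j)} | j. j \<in> J} =
         {{x, y} | x y. \<exists>i\<in>I. fst (F i) \<in> B x \<and> snd (F i) \<in> B y}"
  shows "(d_convex D E I F \<longrightarrow> d_convex D M J F') \<and>
         (d_cayley_connected D E I F \<longrightarrow> d_cayley_connected D M J F')"
proof -
  have mne: "\<forall>x. B x \<noteq> {}"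
    and mdisj: "\<forall>x y. x \<noteq> y \<longrightarrow> B x \<inter> B y = {}"
    and mcov: "(\<Union>x. B x) = UNIV"
    and mconn: "\<forall>x. induces_connected E (B x)"
    and medge: "\<forall>x y. M x y \<longleftrightarrow> (x \<noteq> y \<and> (\<exists>a\<in>B x. \<exists>b\<in>B y. E a b))"
    using assms(4) unfolding induced_minor_model_def by auto
  define \<beta> where "\<beta> a = (SOME x. a \<in> B x)" for a
  have inB: "a \<in> B (\<beta> a)" for a
  proof -
    have "a \<in> (\<Union>x. B x)" using mcov by simp
    then have "\<exists>x. a \<in> B x" by simp
    then show ?thesis unfolding \<beta>_def by (rule someI_ex)
  qed
  have \<beta>eq: "a \<in> B x \<Longrightarrow> \<beta> a = x" for a x
    proof -
    assume "a \<in> B x"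
    with inB[of a] mdisj show ?thesis by blast
  qed
  define \<iota> where "\<iota> j = (SOME i. i \<in> I \<and> {\<beta> (fst (F i)), \<beta> (snd (F i))} = {fst (F' j), snd (F' j)})" for j
  have \<iota>: "\<iota> j \<in> I \<and> {\<beta> (fst (F (\<iota> j))), \<beta> (snd (F (\<iota> j)))} = {fst (F' j), snd (F' j)}"
    if "j \<in> J" for j
  proof -
    have "{fst (F' j), snd (F' j)} \<in> {{x, y} | x y. \<exists>i\<in>I. fst (F i) \<in> B x \<and> snd (F i) \<in> B y}"
    proof -
      have "{fst (F' j), snd (F' j)} \<in> {{fst (F' j), snd (F' j)} | j. j \<in> J}" using that by blast
      then show ?thesis unfolding assms(7) .
    qed
    then obtain x y i where "{fst (F' j), snd (F' j)} = {x,y}" "i \<in> I" "fst (F i) \<in> B x" "snd (F i) \<in> B y"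
      by blast
    then have "\<exists>i. i \<in> I \<and> {\<beta> (fst (F i)), \<beta> (snd (F i))} = {fst (F' j), snd (F' j)}"
      using \<beta>eq by metis
    then show ?thesis unfolding \<iota>_def by (rule someI_ex)
  qed
  define K where "K = (\<lambda>w::real^'i. \<chi> j. if j \<in> J then w $ (\<iota> j) else 0)"
  have linK: "linear K" unfolding K_def by (rule linear_K)
  have key: "cayley_config D M l' J F' = K ` cayley_config D E
       (\<lambda>a b. if \<beta> a = \<beta> b then 0 else l' (\<beta> a) (\<beta> b)) I F"
    and lk: "linkage_lengths E (\<lambda>a b. if \<beta> a = \<beta> b then 0 else l' (\<beta> a) (\<beta> b))"
    if l': "linkage_lengths M l'" for l'
  proof -
    define l where "l = (\<lambda>a b. if \<beta> a = \<beta> b then 0 else l' (\<beta> a) (\<beta> b))"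
    have Mab: "E a b \<Longrightarrow> \<beta> a \<noteq> \<beta> b \<Longrightarrow> M (\<beta> a) (\<beta> b)" for a b
      using medge inB by blast
    show "linkage_lengths E (\<lambda>a b. if \<beta> a = \<beta> b then 0 else l' (\<beta> a) (\<beta> b))"
      unfolding linkage_lengths_def
    proof (intro allI impI)
      fix a b assume ab: "E a b"
      have l'': "\<forall>a b. M a b \<longrightarrow> 0 \<le> l' a b \<and> l' a b = l' b a" using l' unfolding linkage_lengths_def .
      show "0 \<le> (if \<beta> a = \<beta> b then 0 else l' (\<beta> a) (\<beta> b)) \<and>
           (if \<beta> a = \<beta> b then 0 else l' (\<beta> a) (\<beta> b)) = (if \<beta> b = \<beta> a then 0 else l' (\<beta> b) (\<beta> a))"
      proof (cases "\<beta> a = \<beta> b")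
        case True then show ?thesis by simp
      next
        case False
        then have "M (\<beta> a) (\<beta> b)" using Mab ab by blast
        then show ?thesis using l'' False by auto
      qed
    qed
    have R1: "realizations D E l = (\<lambda>q. q \<circ> \<beta>) ` realizations D M l'"
    proof
      show "(\<lambda>q. q \<circ> \<beta>) ` realizations D M l' \<subseteq> realizations D E l"
        using Mab unfolding realizations_def l_def by auto
    next
      show "realizations D E l \<subseteq> (\<lambda>q. q \<circ> \<beta>) ` realizations D M l'"
      proof
        fix p assume p: "p \<in> realizations D E l"
        have const: "p a = p b" if "\<beta> a = \<beta> b" for a b
        proof -
          let ?S = "B (\<beta> a)"
          have "(\<lambda>u v. u \<in> ?S \<and> v \<in> ?S \<and> E u v)\<^sup>*\<^sup>* a b"
          proof -
            have "b \<in> ?S" using inB[of b] that by simp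
            moreover have "induces_connected E ?S" using mconn by blast
            ultimately show ?thesis using inB[of a] unfolding induces_connected_def by blast
          qed
          then show ?thesis
          proof (induction rule: rtranclp_induct)
            case base then show ?case by simp
          next
            case (step y z)
            then have "(norm (p y - p z))\<^sup>2 = 0"
              using p \<beta>eq unfolding realizations_def l_def by auto
            then show ?case using step by simp
          qed
        qed
        define q where "q x = p (SOME a. a \<in> B x)" for x
        have pq: "p = q \<circ> \<beta>"
        proof
          fix a
          have "(SOME c. c \<in> B (\<beta> a)) \<in> B (\<beta> a)" using inB by (metis someI_ex)
          then show "p a = (q \<circ> \<beta>) a" unfolding q_def o_def using const \<beta>eq by metis
        qed
        have "q \<in> realizations D M l'"
          unfolding realizations_def
        proof (intro CollectI allI impI)
          fix x y assume "M x y"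
          then obtain a b where ab: "x \<noteq> y" "a \<in> B x" "b \<in> B y" "E a b" using medge by blast
          then have "(norm (p a - p b))\<^sup>2 = l a b" using p unfolding realizations_def by auto
          then show "(norm (q x - q y))\<^sup>2 = l' x y"
            using ab \<beta>eq pq unfolding l_def by auto
        qed
        then show "p \<in> (\<lambda>q. q \<circ> \<beta>) ` realizations D M l'" using pq by blast
      qed
    qed
    have KC: "K (cayley_map I F (q \<circ> \<beta>)) = cayley_map J F' q" for q :: "'b \<Rightarrow> real^'d"
    proof -
      have "(norm (q (\<beta> (fst (F (\<iota> j)))) - q (\<beta> (snd (F (\<iota> j))))))\<^sup>2
            = (norm (q (fst (F' j)) - q (snd (F' j))))\<^sup>2" if "j \<in> J" for j
      proof -
        from \<iota>[OF that] have e: "{\<beta> (fst (F (\<iota> j))), \<beta> (snd (F (\<iota> j)))} = {fst (F' j), snd (F' j)}" by blast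
        show ?thesis
        proof (cases "\<beta> (fst (F (\<iota> j))) = fst (F' j)")
          case True then show ?thesis using e by (auto simp: doubleton_eq_iff)
        next
          case False then show ?thesis using e by (auto simp: doubleton_eq_iff norm_minus_commute)
        qed
      qed
      then show ?thesis using \<iota> unfolding K_def cayley_map_def by (auto simp: vec_eq_iff)
    qed
    show "cayley_config D M l' J F' = K ` cayley_config D E l I F"
      unfolding cayley_config_def R1 image_image using KC by (simp add: image_image o_def)
  qed
  have cK: "continuous_on S K" for S using linK linear_continuous_on linear_linear by blast
  show ?thesis
  proof (intro conjI impI)
    assume H: "d_convex D E I F"
    show "d_convex D M J F'" unfolding d_convex_def
    proof (intro allI impI)
      fix l' assume l': "linkage_lengths M l'"
      have "convex (cayley_config D E (\<lambda>a b. if \<beta> a = \<beta> b then 0 else l' (\<beta> a) (\<beta> b)) I F)"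
        using H lk[OF l'] unfolding d_convex_def by blast
      then show "convex (cayley_config D M l' J F')"
        unfolding key[OF l'] by (rule convex_linear_image[OF linK])
    qed
  next
    assume H: "d_cayley_connected D E I F"
    show "d_cayley_connected D M J F'" unfolding d_cayley_connected_def
    proof (intro allI impI)
      fix l' assume l': "linkage_lengths M l'"
      have "path_connected (cayley_config D E (\<lambda>a b. if \<beta> a = \<beta> b then 0 else l' (\<beta> a) (\<beta> b)) I F)"
        using H lk[OF l'] unfolding d_cayley_connected_def by blast
      then show "path_connected (cayley_config D M l' J F')"
        unfolding key[OF l'] by (rule path_connected_continuous_image[OF cK])
    qed
  qed
qed

end
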